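(* Let $n\ge2$, $Q>0$ real, and let $P\in\mathrm{Mat}(n^2,\mathbb{C})$ be a solution of rank $r$ to $$P^*=P,\quad P^2=P,\quad Q^2(P_1P_2P_1-P_2P_1P_2)=P_1-P_2,$$ where $P_1=P\otimes I_n$, $P_2=I_n\otimes P$. Let $k=\tfrac12\operatorname{rank}(P_1-P_2)$. Then $$rn-k+Q^{-1}k\le r^2 .$$
   Context: $I_n$ is the $n\times n$ identity matrix and $\otimes$ is the Kronecker product. *)

theory Defs
  imports "HOL-Analysis.Analysis"
begin

definition kron :: "'a::times^'n^'m \<Rightarrow> 'a^'q^'p \<Rightarrow> 'a^('n\<times>'q)^('m\<times>'p)" where
  "kron A B = (\<chi> x y. (A $ fst x $ fst y) * (B $ snd x $ snd y))"

definition adjoint_mat :: "complex^'n^'n \<Rightarrow> complex^'n^'n" where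
  "adjoint_mat A = (\<chi> i j. cnj (A $ j $ i))"

text \<open>Identification of (C^n \<otimes> C^n) \<otimes> C^n with C^n \<otimes> (C^n \<otimes> C^n):
  reindex a matrix indexed by ('n\<times>'n)\<times>'n by 'n\<times>('n\<times>'n).\<close>
definition reassoc :: "'a^(('n::finite\<times>'n)\<times>'n)^(('n\<times>'n)\<times>'n) \<Rightarrow> 'a^('n\<times>('n\<times>'n))^('n\<times>('n\<times>'n))" where
  "reassoc M = (\<chi> x y. M $ ((fst x, fst (snd x)), snd (snd x)) $ ((fst y, fst (snd y)), snd (snd y)))"

definition P1 :: "complex^('n::finite\<times>'n)^('n\<times>'n) \<Rightarrow> complex^('n\<times>('n\<times>'n))^('n\<times>('n\<times>'n))" where
  "P1 P = reassoc (kron P (mat 1 :: complex^'n^'n))"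

definition P2 :: "complex^('n::finite\<times>'n)^('n\<times>'n) \<Rightarrow> complex^('n\<times>('n\<times>'n))^('n\<times>('n\<times>'n))" where
  "P2 P = kron (mat 1 :: complex^'n^'n) P"

end

theory Submission
  imports Defs
begin


lemma row_mult_span:
  fixes A :: "'a::field^'n^'m" and B :: "'a^'p^'n"
  shows "row i (A ** B) = (\<Sum>k\<in>UNIV. A$i$k *s row k B)"
  by (simp add: vec_eq_iff row_def matrix_matrix_mult_def sum_component)

lemma rank_mul_le_right_gen:
  fixes A :: "'a::field^'n^'m" and B :: "'a^'p^'n"
  shows "rank (A ** B) \<le> rank B"
proof -
  have "rows (A ** B) \<subseteq> vec.span (rows B)"
  proof
    fix r assume "r \<in> rows (A ** B)"
    then obtain i where r: "r = row i (A ** B)" by (auto simp: rows_def)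
    show "r \<in> vec.span (rows B)"
      unfolding r row_mult_span
      by (intro vec.span_sum vec.span_scale vec.span_base) (auto simp: rows_def)
  qed
  then have "vec.dim (rows (A ** B)) \<le> vec.dim (vec.span (rows B))"
    by (rule vec.dim_subset)
  then show ?thesis by (simp add: row_rank_def_gen)
qed

lemma trace_idempotent_rank:
  fixes E :: "'a::field^'n^'n"
  assumes EE: "E ** E = E"
  shows "trace E = of_nat (rank E)"
proof -
  obtain B where BE: "B \<subseteq> rows E" and ind: "vec.independent B"
    and sp: "rows E \<subseteq> vec.span B" and cB: "card B = vec.dim (rows E)"
    by (rule vec.basis_exists)
  have fin: "finite B" using ind by (rule vec.finiteI_independent)
  define rep where "rep i = vec.representation B (row i E)" for i
  have rowsp: "row i E \<in> vec.span B" for i using sp by (auto simp: rows_def)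
  have rowexp: "row i E = (\<Sum>c\<in>B. rep i c *s c)" for i
    unfolding rep_def by (rule vec.sum_representation_eq[symmetric, OF ind rowsp fin order_refl])
  have diag: "E$i$i = (\<Sum>c\<in>B. rep i c * c$i)" for i
  proof -
    have "E$i$i = (row i E)$i" by (simp add: row_def)
    also have "\<dots> = (\<Sum>c\<in>B. rep i c * c$i)"
      by (subst rowexp) (simp add: sum_component)
    finally show ?thesis .
  qed
  have one: "(\<Sum>i\<in>UNIV. c$i * rep i c) = 1" if cB: "c \<in> B" for c
  proof -
    obtain j where cj: "c = row j E" using cB BE by (auto simp: rows_def)
    have "row j E = row j (E ** E)" using EE by simp
    also have "\<dots> = (\<Sum>i\<in>UNIV. E$j$i *s row i E)" by (rule row_mult_span)
    finally have ceq: "c = (\<Sum>i\<in>UNIV. c$i *s row i E)"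
      using cj by (simp add: row_def)
    have "vec.representation B c = (\<lambda>d. \<Sum>i\<in>UNIV. vec.representation B (c$i *s row i E) d)"
      by (subst ceq, rule vec.representation_sum[OF ind]) (intro vec.span_scale rowsp)
    also have "\<dots> = (\<lambda>d. \<Sum>i\<in>UNIV. c$i * rep i d)"
      by (simp add: vec.representation_scale[OF ind rowsp] rep_def)
    finally have "vec.representation B c c = (\<Sum>i\<in>UNIV. c$i * rep i c)" by simp
    moreover have "vec.representation B c c = 1"
      by (simp add: vec.representation_basis[OF ind cB])
    ultimately show ?thesis by simp
  qed
  have "trace E = (\<Sum>i\<in>UNIV. \<Sum>c\<in>B. rep i c * c$i)"
    by (simp add: trace_def diag)
  also have "\<dots> = (\<Sum>c\<in>B. \<Sum>i\<in>UNIV. c$i * rep i c)"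
    by (subst sum.swap) (simp add: mult.commute)
  also have "\<dots> = (\<Sum>c\<in>B. 1)" by (rule sum.cong) (auto simp: one)
  also have "\<dots> = of_nat (card B)" by simp
  finally show ?thesis by (simp add: cB row_rank_def_gen)
qed




type_synonym 'm cmat = "complex^'m^'m"

lemma mm_add_rdistrib: "((A::'a::semiring_1^'n^'m) + B) ** C = A ** C + B ** C"
  by (vector matrix_matrix_mult_def sum.distrib[symmetric] field_simps)
lemma mm_diff_ldistrib: "(A::'a::ring_1^'n^'m) ** (B - C) = A ** B - A ** C"
  by (vector matrix_matrix_mult_def sum_subtractf[symmetric] field_simps)
lemma mm_diff_rdistrib: "((A::'a::ring_1^'n^'m) - B) ** C = A ** C - B ** C"
  by (vector matrix_matrix_mult_def sum_subtractf[symmetric] field_simps)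
lemma mm_scaleR_left: "(k *\<^sub>R (A::'a::real_algebra_1^'n^'m)) ** B = k *\<^sub>R (A ** B)"
  by (simp add: scalar_matrix_assoc)
lemma mm_scaleR_right: "(A::'a::real_algebra_1^'n^'m) ** (k *\<^sub>R B) = k *\<^sub>R (A ** B)"
  by (simp add: matrix_scalar_ac scalar_matrix_assoc)

lemmas mm_simps = matrix_mul_assoc matrix_add_ldistrib mm_add_rdistrib mm_diff_ldistrib
  mm_diff_rdistrib mm_scaleR_left mm_scaleR_right

locale twoproj =
  fixes a b :: "complex^'m^'m" and q :: real
  assumes aa: "a ** a = a" and bb: "b ** b = b"
    and H: "q *\<^sub>R (a ** b ** a - b ** a ** b) = a - b"
begin

lemma aa': "X ** a ** a = X ** a" by (metis aa matrix_mul_assoc)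
lemma bb': "X ** b ** b = X ** b" by (metis bb matrix_mul_assoc)
lemmas rel = aa bb aa' bb'

definition "t = a ** b ** a"
definition "R = a - t"

lemma Ha: "q *\<^sub>R (a ** b ** a - b ** a ** b ** a) = a - b ** a"
proof -
  have "(q *\<^sub>R (a ** b ** a - b ** a ** b)) ** a = (a - b) ** a" by (simp add: H)
  then show ?thesis by (simp add: mm_simps rel)
qed

lemma Hb: "q *\<^sub>R (a ** b ** a ** b - b ** a ** b) = a ** b - b"
proof -
  have "(q *\<^sub>R (a ** b ** a - b ** a ** b)) ** b = (a - b) ** b" by (simp add: H)
  then show ?thesis by (simp add: mm_simps rel)
qed

lemma aH: "q *\<^sub>R (a ** b ** a - a ** b ** a ** b) = a - a ** b"
proof -
  have "a ** (q *\<^sub>R (a ** b ** a - b ** a ** b)) = a ** (a - b)" by (simp add: H)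
  then show ?thesis by (simp add: mm_simps rel)
qed

lemma aHa: "q *\<^sub>R (a ** b ** a - a ** b ** a ** b ** a) = a - a ** b ** a"
proof -
  have "(q *\<^sub>R (a ** b ** a - a ** b ** a ** b)) ** a = (a - a ** b) ** a" by (simp add: aH)
  then show ?thesis by (simp add: mm_simps rel)
qed

lemma aR: "a ** R = R" by (simp add: R_def t_def mm_simps rel)
lemma Ra: "R ** a = R" by (simp add: R_def t_def mm_simps rel)

lemma tR: "q *\<^sub>R (t ** R) = R"
proof -
  have "t ** R = a ** b ** a - a ** b ** a ** b ** a"
    by (simp add: R_def t_def mm_simps rel)
  then show ?thesis using aHa by (simp add: R_def t_def)
qed

lemma RR: "q *\<^sub>R (R ** R) = (q - 1) *\<^sub>R R"
proof -
  have "R ** R = a ** R - t ** R" by (metis R_def mm_diff_rdistrib)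
  then have "R ** R = R - t ** R" by (simp add: aR)
  then have "q *\<^sub>R (R ** R) = q *\<^sub>R R - q *\<^sub>R (t ** R)" by (simp add: scaleR_diff_right)
  then show ?thesis using tR by (simp add: scaleR_diff_left)
qed

definition "X = a - b"

lemma lin4:
  fixes A B AB BA ABA BAB ABAB BABA :: "'v::real_vector"
  assumes "q *\<^sub>R (ABA - BABA) = A - BA" "q *\<^sub>R (ABAB - BAB) = AB - B"
  shows "q *\<^sub>R (A + B - AB - BA - ABA - BAB + ABAB + BABA) = (q - 1) *\<^sub>R (A + B - AB - BA)"
proof -
  have 1: "q *\<^sub>R BABA = q *\<^sub>R ABA - A + BA" using assms(1) by (simp add: algebra_simps)
  have 2: "q *\<^sub>R ABAB = q *\<^sub>R BAB + AB - B" using assms(2) by (simp add: algebra_simps)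
  show ?thesis by (simp add: scaleR_add_right scaleR_diff_right 1 2 algebra_simps)
qed

lemma X4: "q *\<^sub>R (X ** X ** X ** X) = (q - 1) *\<^sub>R (X ** X)"
proof -
  have e: "X ** X ** X ** X = a + b - a ** b - b ** a - a ** b ** a - b ** a ** b
      + a ** b ** a ** b + b ** a ** b ** a"
    by (simp add: X_def mm_simps rel algebra_simps)
  have e2: "X ** X = a + b - a ** b - b ** a"
    by (simp add: X_def mm_simps rel algebra_simps)
  show ?thesis apply (subst e) apply (subst e2) by (rule lin4[OF Ha Hb])
qed

end



lemma adj_nth[simp]: "adjoint_mat A $ i $ j = cnj (A $ j $ i)"
  by (simp add: adjoint_mat_def)

lemma adj_mult: "adjoint_mat (A ** B) = adjoint_mat B ** adjoint_mat A"
  by (simp add: vec_eq_iff matrix_matrix_mult_def mult.commute)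
lemma adj_diff: "adjoint_mat (A - B) = adjoint_mat A - adjoint_mat B"
  by (simp add: vec_eq_iff)
lemma adj_add: "adjoint_mat (A + B) = adjoint_mat A + adjoint_mat B"
  by (simp add: vec_eq_iff)
lemma adj_scaleR: "adjoint_mat (k *\<^sub>R A) = k *\<^sub>R adjoint_mat A"
  by (simp add: vec_eq_iff)
lemma adj_adj[simp]: "adjoint_mat (adjoint_mat A) = A"
  by (simp add: vec_eq_iff)

lemma cnj_mult_self: "cnj z * z = complex_of_real ((cmod z)\<^sup>2)"
  by (simp add: complex_norm_square mult.commute del: of_real_power)

lemma adj_self_zero:
  fixes A :: "complex^'m^'m"
  assumes "adjoint_mat A ** A = 0"
  shows "A = 0"
proof -
  have "(\<Sum>i\<in>UNIV. (cmod (A$i$j))\<^sup>2) = 0" for j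
  proof -
    have "(adjoint_mat A ** A) $ j $ j = 0" using assms by simp
    then have "(\<Sum>i\<in>UNIV. cnj (A$i$j) * A$i$j) = 0" by (simp add: matrix_matrix_mult_def)
    then have "(\<Sum>i\<in>UNIV. complex_of_real ((cmod (A$i$j))\<^sup>2)) = 0"
      by (simp only: cnj_mult_self)
    then show ?thesis by (metis of_real_eq_0_iff of_real_sum)
  qed
  then have "\<forall>i\<in>UNIV. (cmod (A$i$j))\<^sup>2 = 0" for j
    by (subst sum_nonneg_eq_0_iff[symmetric]) auto
  then show ?thesis by (simp add: vec_eq_iff)
qed

lemma sum3_swap: "(\<Sum>x\<in>A. \<Sum>y\<in>B. \<Sum>z\<in>C. f x y z) = (\<Sum>y\<in>B. \<Sum>z\<in>C. \<Sum>x\<in>A. f x y z)"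
proof -
  have "(\<Sum>x\<in>A. \<Sum>y\<in>B. \<Sum>z\<in>C. f x y z) = (\<Sum>y\<in>B. \<Sum>x\<in>A. \<Sum>z\<in>C. f x y z)" by (rule sum.swap)
  also have "\<dots> = (\<Sum>y\<in>B. \<Sum>z\<in>C. \<Sum>x\<in>A. f x y z)" by (rule sum.cong[OF refl], rule sum.swap)
  finally show ?thesis .
qed

definition cinner :: "complex^'m \<Rightarrow> complex^'m \<Rightarrow> complex" where
  "cinner x y = (\<Sum>i\<in>UNIV. cnj (x$i) * y$i)"

lemma cinner_adj: "cinner (adjoint_mat A *v x) y = cinner x (A *v y)"
  unfolding cinner_def matrix_vector_mult_def
  apply (simp add: sum_distrib_left sum_distrib_right mult_ac)
  apply (subst sum.swap) apply simp
  done

lemma cinner_self: "cinner x x = of_real (\<Sum>i\<in>UNIV. (cmod (x$i))\<^sup>2)"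
  unfolding cinner_def by (simp only: cnj_mult_self of_real_sum)

lemma cinner_diff_left: "cinner (x - y) z = cinner x z - cinner y z"
  unfolding cinner_def by (simp add: algebra_simps sum_subtractf)
lemma cinner_diff_right: "cinner z (x - y) = cinner z x - cinner z y"
  unfolding cinner_def by (simp add: algebra_simps sum_subtractf)




lemma sum_UNIV_prod: "(\<Sum>p\<in>(UNIV::('a::finite\<times>'b::finite) set). f p) = (\<Sum>x\<in>UNIV. \<Sum>y\<in>UNIV. f (x,y))"
  by (simp add: sum.cartesian_product UNIV_Times_UNIV)

lemma proj_bound:
  fixes a :: "complex^'m^'m"
  assumes ha: "adjoint_mat a = a" and aa: "a ** a = a"
  shows "Re (cinner w (a *v w)) \<le> Re (cinner w w)"
proof -
  have 1: "cinner (a *v w) w = cinner w (a *v w)"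
    using cinner_adj[of a w w] ha by simp
  have 2: "cinner (a *v w) (a *v w) = cinner w (a *v w)"
    using cinner_adj[of a w "a *v w"] ha aa by (simp add: matrix_vector_mul_assoc)
  have "cinner (w - a *v w) (w - a *v w) = cinner w w - cinner w (a *v w)"
    by (simp add: cinner_diff_left cinner_diff_right 1 2)
  moreover have "Re (cinner (w - a *v w) (w - a *v w)) \<ge> 0"
    by (simp add: cinner_self sum_nonneg)
  ultimately show ?thesis by simp
qed

lemma trace_CS:
  fixes C a M :: "complex^'m^'m" and u w :: "'k::finite \<Rightarrow> complex^'m"
  assumes ha: "adjoint_mat a = a" and aa: "a ** a = a" and CC: "C ** adjoint_mat C = a"
    and M: "\<And>X Y. M$X$Y = (\<Sum>K\<in>UNIV. u K $ X * cnj (w K $ Y))"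
  shows "cmod (trace (C ** M)) \<le> sqrt (\<Sum>K\<in>UNIV. \<Sum>X\<in>UNIV. (cmod (u K $ X))\<^sup>2)
                                 * sqrt (\<Sum>K\<in>UNIV. \<Sum>X\<in>UNIV. (cmod (w K $ X))\<^sup>2)"
proof -
  define v where "v K = adjoint_mat C *v w K" for K
  have vc: "cnj (v K $ Y) = (\<Sum>X\<in>UNIV. C$X$Y * cnj (w K $ X))" for K Y
    by (simp add: v_def matrix_vector_mult_def)
  have "trace (C ** M) = (\<Sum>X\<in>UNIV. \<Sum>Y\<in>UNIV. C$X$Y * (\<Sum>K\<in>UNIV. u K $ Y * cnj (w K $ X)))"
    by (simp add: trace_def matrix_matrix_mult_def M)
  also have "\<dots> = (\<Sum>K\<in>UNIV. \<Sum>Y\<in>UNIV. u K $ Y * cnj (v K $ Y))"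
  proof -
    have "(\<Sum>K\<in>UNIV. \<Sum>Y\<in>UNIV. u K $ Y * cnj (v K $ Y))
        = (\<Sum>K\<in>UNIV. \<Sum>Y\<in>UNIV. \<Sum>X\<in>UNIV. C$X$Y * (u K $ Y * cnj (w K $ X)))"
      unfolding vc by (simp add: sum_distrib_left mult_ac)
    also have "\<dots> = (\<Sum>X\<in>UNIV. \<Sum>K\<in>UNIV. \<Sum>Y\<in>UNIV. C$X$Y * (u K $ Y * cnj (w K $ X)))"
      by (rule sum3_swap[symmetric])
    also have "\<dots> = (\<Sum>X\<in>UNIV. \<Sum>Y\<in>UNIV. \<Sum>K\<in>UNIV. C$X$Y * (u K $ Y * cnj (w K $ X)))"
      by (rule sum.cong[OF refl], rule sum.swap)
    also have "\<dots> = (\<Sum>X\<in>UNIV. \<Sum>Y\<in>UNIV. C$X$Y * (\<Sum>K\<in>UNIV. u K $ Y * cnj (w K $ X)))"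
      by (simp add: sum_distrib_left)
    finally show ?thesis by simp
  qed
  also have "\<dots> = (\<Sum>p\<in>UNIV. u (fst p) $ snd p * cnj (v (fst p) $ snd p))"
    by (simp add: sum_UNIV_prod)
  finally have tr: "trace (C ** M) = (\<Sum>p\<in>UNIV. u (fst p) $ snd p * cnj (v (fst p) $ snd p))" .
  have "cmod (trace (C ** M)) \<le> (\<Sum>p\<in>UNIV. cmod (u (fst p) $ snd p) * cmod (v (fst p) $ snd p))"
    unfolding tr by (rule order_trans[OF norm_sum]) (simp add: norm_mult)
  also have "\<dots> \<le> L2_set (\<lambda>p. cmod (u (fst p) $ snd p)) UNIV * L2_set (\<lambda>p. cmod (v (fst p) $ snd p)) UNIV"
    using L2_set_mult_ineq[of "\<lambda>p. cmod (u (fst p) $ snd p)" "\<lambda>p. cmod (v (fst p) $ snd p)" UNIV]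
    by simp
  also have "L2_set (\<lambda>p. cmod (u (fst p) $ snd p)) UNIV = sqrt (\<Sum>K\<in>UNIV. \<Sum>X\<in>UNIV. (cmod (u K $ X))\<^sup>2)"
    by (simp add: L2_set_def sum_UNIV_prod)
  also have "L2_set (\<lambda>p. cmod (v (fst p) $ snd p)) UNIV = sqrt (\<Sum>K\<in>UNIV. \<Sum>X\<in>UNIV. (cmod (v K $ X))\<^sup>2)"
    by (simp add: L2_set_def sum_UNIV_prod)
  also have "(\<Sum>K\<in>UNIV. \<Sum>X\<in>UNIV. (cmod (v K $ X))\<^sup>2) \<le> (\<Sum>K\<in>UNIV. \<Sum>X\<in>UNIV. (cmod (w K $ X))\<^sup>2)"
  proof (rule sum_mono)
    fix K
    have "(\<Sum>X\<in>UNIV. (cmod (v K $ X))\<^sup>2) = Re (cinner (v K) (v K))"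
      by (simp add: cinner_self)
    also have "cinner (v K) (v K) = cinner (w K) (a *v w K)"
      unfolding v_def cinner_adj by (simp add: matrix_vector_mul_assoc CC)
    also have "Re \<dots> \<le> Re (cinner (w K) (w K))" by (rule proj_bound[OF ha aa])
    also have "\<dots> = (\<Sum>X\<in>UNIV. (cmod (w K $ X))\<^sup>2)" by (simp add: cinner_self)
    finally show "(\<Sum>X\<in>UNIV. (cmod (v K $ X))\<^sup>2) \<le> (\<Sum>X\<in>UNIV. (cmod (w K $ X))\<^sup>2)" .
  qed
  then have "sqrt (\<Sum>K\<in>UNIV. \<Sum>X\<in>UNIV. (cmod (v K $ X))\<^sup>2) \<le> sqrt (\<Sum>K\<in>UNIV. \<Sum>X\<in>UNIV. (cmod (w K $ X))\<^sup>2)"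
    by simp
  then have "sqrt (\<Sum>K\<in>UNIV. \<Sum>X\<in>UNIV. (cmod (u K $ X))\<^sup>2) * sqrt (\<Sum>K\<in>UNIV. \<Sum>X\<in>UNIV. (cmod (v K $ X))\<^sup>2)
     \<le> sqrt (\<Sum>K\<in>UNIV. \<Sum>X\<in>UNIV. (cmod (u K $ X))\<^sup>2) * sqrt (\<Sum>K\<in>UNIV. \<Sum>X\<in>UNIV. (cmod (w K $ X))\<^sup>2)"
    by (rule mult_left_mono) (simp_all add: sum_nonneg)
  finally show ?thesis .
qed




lemma P1_nth: "P1 P $ X $ Y = P $ (fst X, fst (snd X)) $ (fst Y, fst (snd Y)) * (if snd (snd X) = snd (snd Y) then 1 else 0)"
  by (simp add: P1_def reassoc_def kron_def mat_def)

lemma P2_nth: "P2 P $ X $ Y = (if fst X = fst Y then 1 else 0) * P $ snd X $ snd Y"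
  by (simp add: P2_def kron_def mat_def)

lemma delta_sum1: "(\<Sum>z\<in>(UNIV::'b::finite set). (f z :: 'a::semiring_1) * (if s = z then 1 else 0)) = f s"
proof -
  have "(\<Sum>z\<in>UNIV. (f z :: 'a::semiring_1) * (if s = z then 1 else 0)) = (\<Sum>z\<in>UNIV. if s = z then f z else 0)"
    by (rule sum.cong) auto
  also have "\<dots> = f s" by (simp add: sum.delta')
  finally show ?thesis .
qed

lemma P1_mult_nth: "(P1 A ** P1 B) $ (x,(y,z)) $ (x'',(y'',z'')) = (P1 (A ** B)) $ (x,(y,z)) $ (x'',(y'',z''))"
proof -
  have "(P1 A ** P1 B) $ (x,(y,z)) $ (x'',(y'',z'')) =
     (\<Sum>x'\<in>UNIV. \<Sum>y'\<in>UNIV. \<Sum>z'\<in>UNIV. (A $ (x,y) $ (x',y') * B $ (x',y') $ (x'',y'') * (if z' = z'' then 1 else 0)) * (if z = z' then 1 else 0))"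
    by (simp add: matrix_matrix_mult_def P1_nth sum_UNIV_prod mult_ac)
  also have "\<dots> = (\<Sum>x'\<in>UNIV. \<Sum>y'\<in>UNIV. A $ (x,y) $ (x',y') * B $ (x',y') $ (x'',y'') * (if z = z'' then 1 else 0))"
    by (simp only: delta_sum1)
  also have "\<dots> = (P1 (A ** B)) $ (x,(y,z)) $ (x'',(y'',z''))"
    by (simp add: matrix_matrix_mult_def P1_nth sum_UNIV_prod sum_distrib_right)
  finally show ?thesis .
qed

lemma P1_mult: "P1 A ** P1 B = P1 (A ** B)"
  by (simp add: vec_eq_iff split_paired_All P1_mult_nth)

lemma times_if1: "(x::'a::semiring_1) * (if c then 1 else 0) = (if c then x else 0)" by simp
lemma times_if2: "(if c then 1 else 0) * (x::'a::semiring_1) = (if c then x else 0)" by simp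
lemma sum_if_out: "(\<Sum>y\<in>A. if c then f y else 0) = (if c then sum f A else 0)" by simp
lemma if_times1: "(if c then (x::'a::semiring_1) else 0) * y = (if c then x * y else 0)" by simp
lemma if_times2: "(y::'a::semiring_1) * (if c then x else 0) = (if c then y * x else 0)" by simp
lemmas delta_simps = times_if1 times_if2 if_times1 if_times2 sum_if_out sum.delta sum.delta'

lemma P2_mult: "P2 A ** P2 B = P2 (A ** B)"
  by (simp add: vec_eq_iff split_paired_All matrix_matrix_mult_def P2_nth sum_UNIV_prod delta_simps)

lemma P1_adj: "adjoint_mat (P1 A) = P1 (adjoint_mat A)"
  by (auto simp: vec_eq_iff P1_nth)

lemma P2_adj: "adjoint_mat (P2 A) = P2 (adjoint_mat A)"
  by (auto simp: vec_eq_iff P2_nth)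

lemma P1_trace: "trace (P1 (A::complex^('n::finite\<times>'n)^('n\<times>'n))) = of_nat CARD('n) * trace A"
  by (simp add: trace_def P1_nth sum_UNIV_prod sum_distrib_left)

lemma P2_trace: "trace (P2 (A::complex^('n::finite\<times>'n)^('n\<times>'n))) = of_nat CARD('n) * trace A"
  by (simp add: trace_def P2_nth sum_UNIV_prod sum_distrib_left)

lemma M_nth: "(P2 P ** P1 P) $ (x,(y,z)) $ (x'',(y'',z'')) = (\<Sum>y'\<in>UNIV. P $ (y,z) $ (y',z'') * P $ (x,y') $ (x'',y''))"
  by (simp add: matrix_matrix_mult_def P1_nth P2_nth sum_UNIV_prod delta_simps)




lemma trace_scaleR: "trace (c *\<^sub>R (A::complex^'m^'m)) = c *\<^sub>R trace A"
  by (simp add: trace_def scaleR_sum_right)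

lemma rank_zero_gen: "rank (0::complex^'n^'n) = 0"
proof -
  have "trace (0::complex^'n^'n) = of_nat (rank (0::complex^'n^'n))"
    by (rule trace_idempotent_rank) simp
  moreover have "trace (0::complex^'n^'n) = 0" by (simp add: trace_def)
  ultimately show ?thesis by simp
qed

lemma rank_scaleR_le: "rank ((c *\<^sub>R A) ** (B::complex^'m^'m)) \<le> rank B"
  by (rule rank_mul_le_right_gen)

lemma lin6:
  fixes X2 X4 X6 :: "'v::real_vector"
  assumes "q *\<^sub>R X4 = (q - 1) *\<^sub>R X2" "q *\<^sub>R X6 = (q - 1) *\<^sub>R X4"
  shows "q *\<^sub>R q *\<^sub>R X6 - q *\<^sub>R (q - 1) *\<^sub>R X4 - ((q - 1) *\<^sub>R q *\<^sub>R X4 - (q - 1) *\<^sub>R (q - 1) *\<^sub>R X2) = 0"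
proof -
  have 1: "q *\<^sub>R q *\<^sub>R X6 = q *\<^sub>R (q - 1) *\<^sub>R X4" using assms(2) by simp
  have 2: "(q - 1) *\<^sub>R q *\<^sub>R X4 = (q - 1) *\<^sub>R (q - 1) *\<^sub>R X2" using assms(1) by simp
  show ?thesis unfolding 1 2 by simp
qed

locale twoherm = twoproj +
  assumes ha: "adjoint_mat a = a" and hb: "adjoint_mat b = b" and tab: "trace a = trace b"
    and qpos: "q > 0"
begin

lemma hX: "adjoint_mat X = X" by (simp add: X_def adj_diff ha hb)

lemma X6: "q *\<^sub>R (X ** X ** X ** X ** X ** X) = (q - 1) *\<^sub>R (X ** X ** X ** X)"
proof -
  have "q *\<^sub>R (X ** X ** X ** X ** X ** X) = (q *\<^sub>R (X ** X ** X ** X)) ** X ** X"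
    by (simp add: mm_scaleR_left)
  also have "\<dots> = (q - 1) *\<^sub>R (X ** X ** X ** X)"
    by (simp add: X4 mm_scaleR_left matrix_mul_assoc)
  finally show ?thesis .
qed

lemma X3: "q *\<^sub>R (X ** X ** X) = (q - 1) *\<^sub>R X"
proof -
  define Z where "Z = q *\<^sub>R (X ** X ** X) - (q - 1) *\<^sub>R X"
  have hZ: "adjoint_mat Z = Z"
    by (simp add: Z_def adj_diff adj_scaleR adj_mult hX matrix_mul_assoc)
  have "Z ** Z = q *\<^sub>R q *\<^sub>R (X ** X ** X ** X ** X ** X) - q *\<^sub>R (q - 1) *\<^sub>R (X ** X ** X ** X)
      - ((q - 1) *\<^sub>R q *\<^sub>R (X ** X ** X ** X) - (q - 1) *\<^sub>R (q - 1) *\<^sub>R (X ** X))"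
    by (simp add: Z_def mm_simps scaleR_diff_right)
  also have "\<dots> = 0" by (rule lin6[OF X4 X6])
  finally have "adjoint_mat Z ** Z = 0" by (simp add: hZ)
  then have "Z = 0" by (rule adj_self_zero)
  then show ?thesis by (simp add: Z_def)
qed

lemma trX2: "trace (X ** X) = 2 * trace R"
proof -
  have e2: "X ** X = a + b - a ** b - b ** a"
    by (simp add: X_def mm_simps rel algebra_simps)
  have "trace (a ** b ** a) = trace (a ** b)"
    by (metis aa matrix_mul_assoc trace_mul_sym)
  then show ?thesis
    by (simp add: e2 R_def t_def trace_add trace_sub tab trace_mul_sym[of b a])
qed

lemma rankX: "(q - 1) *\<^sub>R (of_nat (rank X) :: complex) = (2 * q) *\<^sub>R trace R"
proof (cases "q = 1")
  case True
  then have X3z: "X ** X ** X = 0" using X3 by simp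
  have "adjoint_mat (X ** X) ** (X ** X) = X ** (X ** X ** X)"
    by (simp add: adj_mult hX matrix_mul_assoc)
  also have "\<dots> = 0" by (simp add: X3z)
  finally have "X ** X = 0" by (rule adj_self_zero)
  then have "adjoint_mat X ** X = 0" by (simp add: hX)
  then have "X = 0" by (rule adj_self_zero)
  then have "trace R = 0" using trX2 by (simp add: trace_def)
  then show ?thesis using True by simp
next
  case False
  define c where "c = q / (q - 1)"
  define E where "E = c *\<^sub>R (X ** X)"
  have c1: "c * (q - 1) = q" using False by (simp add: c_def)
  have X4': "X ** X ** X ** X = ((q - 1) / q) *\<^sub>R (X ** X)"
  proof -
    have "((q - 1) / q) *\<^sub>R (X ** X) = (1/q) *\<^sub>R ((q - 1) *\<^sub>R (X ** X))" by simp
    also have "\<dots> = (1/q) *\<^sub>R (q *\<^sub>R (X ** X ** X ** X))" by (simp only: X4)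
    also have "\<dots> = X ** X ** X ** X" using qpos by simp
    finally show ?thesis by simp
  qed
  have X3': "X ** X ** X = ((q - 1) / q) *\<^sub>R X"
  proof -
    have "((q - 1) / q) *\<^sub>R X = (1/q) *\<^sub>R ((q - 1) *\<^sub>R X)" by simp
    also have "\<dots> = (1/q) *\<^sub>R (q *\<^sub>R (X ** X ** X))" by (simp only: X3)
    also have "\<dots> = X ** X ** X" using qpos by simp
    finally show ?thesis by simp
  qed
  have cc: "c * c * ((q - 1) / q) = c" using c1 qpos by (simp add: field_simps)
  have cc2: "c * ((q - 1) / q) = 1" using c1 qpos by (simp add: field_simps)
  have "E ** E = (c * c) *\<^sub>R (X ** X ** X ** X)" by (simp add: E_def mm_simps)
  also have "\<dots> = E" unfolding X4' E_def using cc by simp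
  finally have EE: "E ** E = E" .
  have "X ** E = c *\<^sub>R (X ** X ** X)" by (simp add: E_def mm_simps)
  also have "\<dots> = X" unfolding X3' using cc2 by simp
  finally have XE: "X ** E = X" .
  have "rank X \<le> rank E" using rank_mul_le_right_gen[of X E] XE by simp
  moreover have "rank E \<le> rank X"
    using rank_mul_le_right_gen[of "c *\<^sub>R X" X] by (simp add: E_def mm_scaleR_left)
  ultimately have rXE: "rank X = rank E" by simp
  have "(of_nat (rank X) :: complex) = trace E" using trace_idempotent_rank[OF EE] rXE by simp
  also have "\<dots> = c *\<^sub>R (2 * trace R)" by (simp add: E_def trace_scaleR trX2)
  finally have "(q - 1) *\<^sub>R (of_nat (rank X) :: complex) = ((q - 1) * c) *\<^sub>R (2 * trace R)" by simp
  also have "\<dots> = (2 * q) *\<^sub>R trace R" using c1 by (simp add: mult.commute scaleR_conv_of_real)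
  finally show ?thesis .
qed

end



locale twoQ = twoherm +
  fixes Q :: real
  assumes Qpos: "Q > 0" and qQ: "q = Q^2"
begin

definition "beta = Q / (1 + Q)"
definition "gamma = Q^2 / (1 + Q)"
definition "Sp = a + gamma *\<^sub>R R"
definition "S = a - beta *\<^sub>R R"

lemma hR: "adjoint_mat R = R"
  by (simp add: R_def t_def adj_diff adj_mult ha hb matrix_mul_assoc)

lemma RR': "R ** R = ((q - 1) / q) *\<^sub>R R"
proof -
  have "((q - 1) / q) *\<^sub>R R = (1/q) *\<^sub>R ((q - 1) *\<^sub>R R)" by simp
  also have "\<dots> = (1/q) *\<^sub>R (q *\<^sub>R (R ** R))" by (simp only: RR)
  also have "\<dots> = R ** R" using qpos by simp
  finally show ?thesis by simp
qed

lemma t_eq: "t = a - R" by (simp add: R_def)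

lemma Spa: "Sp ** a = Sp" by (simp add: Sp_def mm_simps aa Ra)
lemma aSp: "a ** Sp = Sp" by (simp add: Sp_def mm_simps aa aR)
lemma hSp: "adjoint_mat Sp = Sp" by (simp add: Sp_def adj_add adj_scaleR ha hR)

lemma coef1: "gamma * (q - 1) / q = Q - 1"
proof -
  have "1 + Q \<noteq> 0" "Q \<noteq> 0" using Qpos by auto
  then have "gamma * (q - 1) / q = (Q - 1) * ((1 + Q) * Q^2) / ((1 + Q) * Q^2)"
    by (simp add: gamma_def qQ field_simps power2_eq_square)
  also have "\<dots> = Q - 1" using \<open>1 + Q \<noteq> 0\<close> \<open>Q \<noteq> 0\<close> by simp
  finally show ?thesis .
qed
lemma coef2: "gamma - 1 - (Q - 1) = - beta"
proof -
  have "1 + Q \<noteq> 0" using Qpos by auto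
  then show ?thesis by (simp add: gamma_def beta_def field_simps power2_eq_square)
qed
lemma coef3: "gamma - beta * Q = 0"
proof -
  have "1 + Q \<noteq> 0" using Qpos by auto
  then show ?thesis by (simp add: gamma_def beta_def field_simps power2_eq_square)
qed
lemma RQ: "R + (Q - 1) *\<^sub>R R = Q *\<^sub>R R" by (simp add: scaleR_diff_left)

lemma SpR: "Sp ** R = Q *\<^sub>R R"
proof -
  have "Sp ** R = R + gamma *\<^sub>R (R ** R)" by (simp add: Sp_def mm_simps aR)
  also have "\<dots> = R + (gamma * (q - 1) / q) *\<^sub>R R" by (simp add: RR')
  also have "\<dots> = Q *\<^sub>R R" by (simp only: coef1 RQ)
  finally show ?thesis .
qed

lemma RSp: "R ** Sp = Q *\<^sub>R R"
proof -
  have "R ** Sp = R + gamma *\<^sub>R (R ** R)" by (simp add: Sp_def mm_simps Ra)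
  also have "\<dots> = R + (gamma * (q - 1) / q) *\<^sub>R R" by (simp add: RR')
  also have "\<dots> = Q *\<^sub>R R" by (simp only: coef1 RQ)
  finally show ?thesis .
qed

lemma Spba: "Sp ** b ** a = S"
proof -
  have "Sp ** b ** a = Sp ** t" by (metis Spa t_def matrix_mul_assoc)
  also have "\<dots> = Sp - Sp ** R" by (simp add: t_eq mm_diff_ldistrib Spa)
  also have "\<dots> = a + (gamma - 1 - (Q - 1)) *\<^sub>R R"
    unfolding SpR by (simp add: Sp_def algebra_simps)
  also have "\<dots> = S" by (simp add: coef2 S_def)
  finally show ?thesis .
qed

lemma CC: "(Sp ** b) ** adjoint_mat (Sp ** b) = a"
proof -
  have "(Sp ** b) ** adjoint_mat (Sp ** b) = Sp ** b ** Sp"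
    by (simp add: adj_mult hb hSp matrix_mul_assoc bb')
  also have "\<dots> = Sp ** b ** a ** Sp" by (metis aSp matrix_mul_assoc)
  also have "\<dots> = S ** Sp" by (simp add: Spba)
  also have "\<dots> = Sp - beta *\<^sub>R (R ** Sp)" by (simp add: S_def mm_simps aSp)
  also have "\<dots> = a + (gamma - beta * Q) *\<^sub>R R"
    unfolding RSp by (simp add: Sp_def algebra_simps)
  also have "\<dots> = a" by (simp add: coef3)
  finally show ?thesis .
qed

lemma CM: "(Sp ** b) ** (b ** a) = S"
  by (metis Spba bb' matrix_mul_assoc)

lemma trS: "trace S = trace a - beta *\<^sub>R trace R"
  by (simp add: S_def trace_sub trace_scaleR)

end



lemma PP_entry:
  fixes P :: "complex^'m^'m"
  assumes "adjoint_mat P = P" "P ** P = P"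
  shows "P $ A $ B = (\<Sum>J\<in>UNIV. P $ A $ J * cnj (P $ B $ J))"
proof -
  have "P = P ** adjoint_mat P" using assms by simp
  then have "P $ A $ B = (P ** adjoint_mat P) $ A $ B" by simp
  then show ?thesis by (simp add: matrix_matrix_mult_def)
qed

lemma bij_sum_prod:
  fixes h :: "'a::finite \<Rightarrow> 'b::finite \<times> 'c::finite" and f :: "'b \<Rightarrow> real" and g :: "'c \<Rightarrow> real"
  assumes "bij h"
  shows "(\<Sum>p\<in>UNIV. f (fst (h p)) * g (snd (h p))) = (\<Sum>q\<in>UNIV. f q) * (\<Sum>q\<in>UNIV. g q)"
proof -
  have "(\<Sum>p\<in>UNIV. f (fst (h p)) * g (snd (h p))) = (\<Sum>q\<in>UNIV. f (fst q) * g (snd q))"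
    using sum.reindex_bij_betw[of h UNIV UNIV "\<lambda>q. f (fst q) * g (snd q)"] assms by simp
  also have "\<dots> = (\<Sum>x\<in>UNIV. \<Sum>y\<in>UNIV. f x * g y)"
    by (rule trans[OF sum_UNIV_prod]) simp
  also have "\<dots> = (\<Sum>q\<in>UNIV. f q) * (\<Sum>q\<in>UNIV. g q)" by (simp add: sum_product)
  finally show ?thesis .
qed

lemma sum_pair: "(\<Sum>K\<in>UNIV. \<Sum>X\<in>UNIV. g K X) = (\<Sum>p\<in>(UNIV::('a::finite\<times>'b::finite) set). g (fst p) (snd p))"
  by (subst sum_UNIV_prod) simp

definition uu :: "complex^('n::finite\<times>'n)^('n\<times>'n) \<Rightarrow> 'n \<times> (('n\<times>'n)\<times>('n\<times>'n)) \<Rightarrow> complex^('n\<times>('n\<times>'n))" where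
  "uu P K = (\<chi> X. P $ (fst (snd X), snd (snd X)) $ fst (snd K) * P $ (fst X, fst K) $ snd (snd K))"
definition ww :: "complex^('n::finite\<times>'n)^('n\<times>'n) \<Rightarrow> 'n \<times> (('n\<times>'n)\<times>('n\<times>'n)) \<Rightarrow> complex^('n\<times>('n\<times>'n))" where
  "ww P K = (\<chi> X. P $ (fst K, snd (snd X)) $ fst (snd K) * P $ (fst X, fst (snd X)) $ snd (snd K))"

lemma sum_K: "(\<Sum>K\<in>(UNIV::('n::finite \<times> (('n\<times>'n)\<times>('n\<times>'n))) set). f K) = (\<Sum>y'\<in>UNIV. \<Sum>J1\<in>UNIV. \<Sum>J2\<in>UNIV. f (y',(J1,J2)))"
  by (simp add: sum_UNIV_prod)

lemma M_u:
  fixes P :: "complex^('n::finite\<times>'n)^('n\<times>'n)"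
  assumes hP: "adjoint_mat P = P" and PP: "P ** P = P"
  shows "(P2 P ** P1 P) $ X $ Y = (\<Sum>K\<in>UNIV. uu P K $ X * cnj (ww P K $ Y))"
proof -
  obtain x y z where X: "X = (x,(y,z))" by (metis prod_cases3)
  obtain x'' y'' z'' where Y: "Y = (x'',(y'',z''))" by (metis prod_cases3)
  have "(\<Sum>K\<in>UNIV. uu P K $ X * cnj (ww P K $ Y)) =
     (\<Sum>y'\<in>UNIV. \<Sum>J1\<in>UNIV. \<Sum>J2\<in>UNIV. (P $ (y,z) $ J1 * P $ (x,y') $ J2) * cnj (P $ (y',z'') $ J1 * P $ (x'',y'') $ J2))"
    unfolding sum_K by (simp add: uu_def ww_def X Y)
  also have "\<dots> = (\<Sum>y'\<in>UNIV. (\<Sum>J1\<in>UNIV. P $ (y,z) $ J1 * cnj (P $ (y',z'') $ J1)) * (\<Sum>J2\<in>UNIV. P $ (x,y') $ J2 * cnj (P $ (x'',y'') $ J2)))"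
    apply (simp add: sum_product mult_ac)
    apply (rule sum.cong[OF refl])
    by (rule sum.swap)
  also have "\<dots> = (\<Sum>y'\<in>UNIV. P $ (y,z) $ (y',z'') * P $ (x,y') $ (x'',y''))"
    by (simp only: PP_entry[OF hP PP, symmetric])
  also have "\<dots> = (P2 P ** P1 P) $ X $ Y" by (simp add: X Y M_nth)
  finally show ?thesis by simp
qed

definition "hu p = (((fst (snd (snd p)), snd (snd (snd p))), fst (snd (fst p))), ((fst (snd p), fst (fst p)), snd (snd (fst p))))"
definition "gu q = ((snd (fst (snd q)), (snd (fst q), snd (snd q))), (fst (fst (snd q)), fst (fst q)))"
definition "hw p = (((fst (fst p), snd (snd (snd p))), fst (snd (fst p))), ((fst (snd p), fst (snd (snd p))), snd (snd (fst p))))"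
definition "gw q = ((fst (fst (fst q)), (snd (fst q), snd (snd q))), (fst (fst (snd q)), (snd (fst (snd q)), snd (fst (fst q)))))"

lemma bij_hu: "bij (hu :: ('n \<times> (('n\<times>'n)\<times>('n\<times>'n))) \<times> ('n\<times>('n\<times>'n)) \<Rightarrow> _)"
  by (rule o_bij[of gu]) (auto simp: fun_eq_iff hu_def gu_def)
lemma bij_hw: "bij (hw :: ('n \<times> (('n\<times>'n)\<times>('n\<times>'n))) \<times> ('n\<times>('n\<times>'n)) \<Rightarrow> _)"
  by (rule o_bij[of gw]) (auto simp: fun_eq_iff hw_def gw_def)

definition "FF P = (\<Sum>q\<in>UNIV. (cmod (P $ fst q $ snd q))\<^sup>2)"

lemma sq_u: "(\<Sum>K\<in>UNIV. \<Sum>X\<in>UNIV. (cmod (uu (P::complex^('n::finite\<times>'n)^('n\<times>'n)) K $ X))\<^sup>2) = FF P * FF P"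
proof -
  have "(\<Sum>K\<in>UNIV. \<Sum>X\<in>UNIV. (cmod (uu P K $ X))\<^sup>2) =
     (\<Sum>p\<in>UNIV. (\<lambda>q. (cmod (P $ fst q $ snd q))\<^sup>2) (fst (hu p)) * (\<lambda>q. (cmod (P $ fst q $ snd q))\<^sup>2) (snd (hu p)))"
    unfolding sum_pair by (rule sum.cong) (auto simp: uu_def hu_def norm_mult power_mult_distrib)
  also have "\<dots> = FF P * FF P" unfolding FF_def by (rule bij_sum_prod[OF bij_hu])
  finally show ?thesis .
qed

lemma sq_w: "(\<Sum>K\<in>UNIV. \<Sum>X\<in>UNIV. (cmod (ww (P::complex^('n::finite\<times>'n)^('n\<times>'n)) K $ X))\<^sup>2) = FF P * FF P"
proof -
  have "(\<Sum>K\<in>UNIV. \<Sum>X\<in>UNIV. (cmod (ww P K $ X))\<^sup>2) =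
     (\<Sum>p\<in>UNIV. (\<lambda>q. (cmod (P $ fst q $ snd q))\<^sup>2) (fst (hw p)) * (\<lambda>q. (cmod (P $ fst q $ snd q))\<^sup>2) (snd (hw p)))"
    unfolding sum_pair by (rule sum.cong) (auto simp: ww_def hw_def norm_mult power_mult_distrib)
  also have "\<dots> = FF P * FF P" unfolding FF_def by (rule bij_sum_prod[OF bij_hw])
  finally show ?thesis .
qed

lemma FF_rank:
  fixes P :: "complex^'m^'m"
  assumes hP: "adjoint_mat P = P" and PP: "P ** P = P"
  shows "FF P = real (rank P)"
proof -
  have "trace P = (\<Sum>A\<in>UNIV. \<Sum>J\<in>UNIV. P $ A $ J * cnj (P $ A $ J))"
    unfolding trace_def by (rule sum.cong[OF refl]) (rule PP_entry[OF hP PP])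
  also have "\<dots> = (\<Sum>A\<in>UNIV. \<Sum>J\<in>UNIV. of_real ((cmod (P$A$J))\<^sup>2))"
    by (simp only: complex_norm_square)
  also have "\<dots> = of_real (FF P)"
    by (simp only: FF_def sum_UNIV_prod of_real_sum fst_conv snd_conv)
  finally have "trace P = of_real (FF P)" .
  moreover have "trace P = of_nat (rank P)" by (rule trace_idempotent_rank[OF PP])
  ultimately show ?thesis by (metis of_real_eq_iff of_real_of_nat_eq)
qed




theorem lemma6:
  fixes P :: "complex^('n::finite\<times>'n)^('n\<times>'n)" and Q :: real
  assumes "CARD('n) \<ge> 2"
    and "Q > 0"
    and "adjoint_mat P = P"
    and "P ** P = P"
    and "(Q^2) *\<^sub>R (P1 P ** P2 P ** P1 P - P2 P ** P1 P ** P2 P) = P1 P - P2 P"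
  shows "real (rank P) * real CARD('n) - real (rank (P1 P - P2 P)) / 2
           + (real (rank (P1 P - P2 P)) / 2) / Q \<le> (real (rank P))^2"
proof -
  note hP = assms(3) and PP = assms(4) and Qp = assms(2)
  interpret twoQ "P1 P" "P2 P" "Q^2" Q
  proof unfold_locales
    show "P1 P ** P1 P = P1 P" by (simp add: P1_mult PP)
    show "P2 P ** P2 P = P2 P" by (simp add: P2_mult PP)
    show "(Q^2) *\<^sub>R (P1 P ** P2 P ** P1 P - P2 P ** P1 P ** P2 P) = P1 P - P2 P" by (rule assms(5))
    show "adjoint_mat (P1 P) = P1 P" by (simp add: P1_adj hP)
    show "adjoint_mat (P2 P) = P2 P" by (simp add: P2_adj hP)
    show "trace (P1 P) = trace (P2 P)" by (simp add: P1_trace P2_trace)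
    show "Q^2 > 0" using Qp by simp
    show "Q > 0" by (rule Qp)
  qed simp
  define r where "r = real (rank P)"
  define kk where "kk = real (rank (P1 P - P2 P))"
  define N where "N = real CARD('n)"
  have trP: "trace P = of_real r" using trace_idempotent_rank[OF PP] by (simp add: r_def)
  have tra: "trace (P1 P) = of_real (N * r)" by (simp add: P1_trace trP N_def)
  have rk: "(Q^2 - 1) * kk = 2 * Q^2 * Re (trace R)"
    using arg_cong[OF rankX, of Re] by (simp add: X_def kk_def)
  have bound: "cmod (trace S) \<le> r^2"
  proof -
    have "cmod (trace S) = cmod (trace ((Sp ** P2 P) ** (P2 P ** P1 P)))" by (simp add: CM)
    also have "\<dots> \<le> sqrt (\<Sum>K\<in>UNIV. \<Sum>X\<in>UNIV. (cmod (uu P K $ X))\<^sup>2) * sqrt (\<Sum>K\<in>UNIV. \<Sum>X\<in>UNIV. (cmod (ww P K $ X))\<^sup>2)"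
      by (rule trace_CS[OF ha aa CC M_u[OF hP PP]])
    also have "\<dots> = r^2"
      unfolding sq_u sq_w FF_rank[OF hP PP] r_def by (simp add: power2_eq_square)
    finally show ?thesis .
  qed
  have "Re (trace S) = N * r - beta * Re (trace R)" by (simp add: trS tra)
  moreover have "Re (trace S) \<le> r^2" using bound complex_Re_le_cmod order_trans by blast
  ultimately have main: "N * r - beta * Re (trace R) \<le> r^2" by simp
  have "Re (trace R) = (Q^2 - 1) * kk / (2 * Q^2)" using rk Qp by (simp add: field_simps)
  then have "beta * Re (trace R) = kk / 2 - (kk / 2) / Q"
    using Qp by (simp add: beta_def field_simps power2_eq_square)
  then show ?thesis using main by (simp add: r_def kk_def N_def mult.commute)
qed


end
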